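(* Let $K$ be a field with algebraic closure $\overline{K}$, $U=\{u_1,\dots,u_d\}$ parameters and $X=\{x_1,\dots,x_n\}$ variables ordered $u_1\prec\dots\prec u_d\prec x_1\prec\dots\prec x_n$. Let $\mathbf{P}=\{p\}$ be a parametric system in $K[U][X]$ consisting of a single polynomial $p$, let $\mathbb{S}$ be a Wu's decomposition of $\mathbf{P}$ in $K[U][X]$, and let $\mathcal{L}=\{\mathbf{C}_{l,1},\dots,\mathbf{C}_{l,k}\}$ be a line of $\mathbb{S}$. Then for every $a\in\overline{K}^d\setminus\mathrm{V}^U(\mathbf{C}_{l,k})$, $p(a)$ is not the zero polynomial of $\overline{K}[X]$.
   Context: A parametric system is a non-empty finite subset of $K[U][X]\setminus K[X]$. For $F\in K[U][X]\setminus\{0\}$, its class is the largest $p$ with $\deg(F,x_p)>0$ (0 if none); if the class is $p>0$ the main variable is $x_p$ and, writing $F=C_0x_p^m+\dots+C_m$ with $C_0\ne0$, the initial is $\mathrm{I}(F)=C_0$. A triangular set is $\{T_1,\dots,T_r\}$ with strictly increasing positive classes. A non-contradictory ascending chain is a triangular set in which each $T_i$ has degree in $\mathrm{mvar}(T_j)$ less than $\deg(T_j,\mathrm{mvar}(T_j))$ for all $j<i$; a contradictory ascending chain is $\{F\}$ with $0\ne F\in K[U]$. An ascending chain $\mathbf{C}$ is a characteristic set of $\mathbf{P}$ if $\mathbf{C}\subset\langle\mathbf{P}\rangle_{K[U][X]}$ and the successive pseudo-remainder of each element of $\mathbf{P}$ w.r.t. $\mathbf{C}$ is $0$. A Wu's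 decomposition of $\mathbf{P}$ is the finite set of ascending chains produced by Wu's method: compute a characteristic set $\mathbf{C}$ of $\mathbf{P}$; if $\mathbf{C}=\{C_1,\dots,C_t\}$ is non-contradictory, recursively apply the method to each $\mathbf{P}\cup\mathbf{C}\cup\{\mathrm{I}(C_i)\}$; all characteristic sets obtained form the decomposition. A line of a Wu's decomposition $\mathbb{S}$ of $\mathbf{P}_1$ is a subset $\{\mathbf{C}_{l,1},\dots,\mathbf{C}_{l,k}\}$ such that $\mathbf{C}_{l,1}$ is a characteristic set of $\mathbf{P}_1$; for $2\le i\le k$, $\mathbf{C}_{l,i}$ is a characteristic set of $\mathbf{P}_i=\mathbf{P}_{i-1}\cup\mathbf{C}_{l,i-1}\cup\{\mathrm{I}(C_{l,i-1})\}$ for some $C_{l,i-1}\in\mathbf{C}_{l,i-1}$; and $\mathbf{C}_{l,1},\dots,\mathbf{C}_{l,k-1}$ are non-contradictory while $\mathbf{C}_{l,k}$ is contradictory. $F(a)$ denotes substitution of $a\in\overline{K}^d$ for $U$; $\mathrm{V}^U(\mathbf{B})$ is the common zero set in $\overline{K}^d$ of $\mathbf{B}\subset K[U]$. *)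

theory Defs
  imports "HOL-Library.Poly_Mapping" "HOL-Computational_Algebra.Polynomial"
begin

text \<open>Parameter u_i (1 <= i <= d) is variable number i-1, variable x_j (1 <= j <= n)
  is variable number d+j-1.  K[U][X] is the subring of polynomials involving only
  variables of index < d+n; K[U] those of index < d; K[X] those of index in [d, d+n).\<close>

type_synonym 'a mpoly = "(nat \<Rightarrow>\<^sub>0 nat) \<Rightarrow>\<^sub>0 'a"

definition vars_in :: "nat set \<Rightarrow> 'a::zero mpoly \<Rightarrow> bool" where
  "vars_in V F \<longleftrightarrow> (\<forall>m\<in>Poly_Mapping.keys F. \<forall>i. Poly_Mapping.lookup m i > 0 \<longrightarrow> i \<in> V)"

definition in_KUX :: "nat \<Rightarrow> nat \<Rightarrow> 'a::zero mpoly \<Rightarrow> bool" where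
  "in_KUX d n F \<longleftrightarrow> vars_in {..<d+n} F"

definition in_KU :: "nat \<Rightarrow> 'a::zero mpoly \<Rightarrow> bool" where
  "in_KU d F \<longleftrightarrow> vars_in {..<d} F"

definition in_KX :: "nat \<Rightarrow> nat \<Rightarrow> 'a::zero mpoly \<Rightarrow> bool" where
  "in_KX d n F \<longleftrightarrow> vars_in {d..<d+n} F"

definition parametric_system :: "nat \<Rightarrow> nat \<Rightarrow> 'a::zero mpoly set \<Rightarrow> bool" where
  "parametric_system d n P \<longleftrightarrow> P \<noteq> {} \<and> finite P \<and> (\<forall>F\<in>P. in_KUX d n F \<and> \<not> in_KX d n F)"

definition deg_in :: "nat \<Rightarrow> 'a::zero mpoly \<Rightarrow> nat" where
  "deg_in v F = Max (insert 0 ((\<lambda>m. Poly_Mapping.lookup m v) ` Poly_Mapping.keys F))"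

definition cls :: "nat \<Rightarrow> nat \<Rightarrow> 'a::zero mpoly \<Rightarrow> nat" where
  "cls d n F = (if \<exists>p\<in>{1..n}. deg_in (d + p - 1) F > 0
                then Max {p\<in>{1..n}. deg_in (d + p - 1) F > 0} else 0)"

definition mvar :: "nat \<Rightarrow> nat \<Rightarrow> 'a::zero mpoly \<Rightarrow> nat" where
  "mvar d n F = d + cls d n F - 1"

definition lcoeff_in :: "nat \<Rightarrow> 'a::zero mpoly \<Rightarrow> 'a mpoly" where
  "lcoeff_in v F = Abs_poly_mapping
     (\<lambda>m. if Poly_Mapping.lookup m v = 0 then Poly_Mapping.lookup F (m + Poly_Mapping.single v (deg_in v F)) else 0)"

definition initial :: "nat \<Rightarrow> nat \<Rightarrow> 'a::zero mpoly \<Rightarrow> 'a mpoly" where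
  "initial d n F = lcoeff_in (mvar d n F) F"

definition prem_in :: "nat \<Rightarrow> 'a::comm_ring_1 mpoly \<Rightarrow> 'a mpoly \<Rightarrow> 'a mpoly" where
  "prem_in v F G = (THE R. deg_in v R < deg_in v G \<and>
      (\<exists>Q. lcoeff_in v G ^ (deg_in v F + 1 - deg_in v G) * F = Q * G + R))"

text \<open>Pseudo-remainder of F by an element G of an ascending chain: w.r.t. the main
  variable of G; if G has class 0 (contradictory chain, G in K[U] nonzero) the remainder is 0.\<close>
definition prem :: "nat \<Rightarrow> nat \<Rightarrow> 'a::comm_ring_1 mpoly \<Rightarrow> 'a mpoly \<Rightarrow> 'a mpoly" where
  "prem d n F G = (if cls d n G = 0 then 0 else prem_in (mvar d n G) F G)"

text \<open>Chains are represented as lists ordered by increasing class.  Successive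
  pseudo-remainder: first w.r.t. the last element, ..., finally w.r.t. the first.\<close>
definition sprem :: "nat \<Rightarrow> nat \<Rightarrow> 'a::comm_ring_1 mpoly \<Rightarrow> 'a mpoly list \<Rightarrow> 'a mpoly" where
  "sprem d n F C = foldr (\<lambda>G R. prem d n R G) C F"

definition triangular_set :: "nat \<Rightarrow> nat \<Rightarrow> 'a::zero mpoly list \<Rightarrow> bool" where
  "triangular_set d n C \<longleftrightarrow> (\<forall>T\<in>set C. in_KUX d n T \<and> cls d n T > 0) \<and>
     sorted_wrt (\<lambda>S T. cls d n S < cls d n T) C"

definition noncontra_chain :: "nat \<Rightarrow> nat \<Rightarrow> 'a::zero mpoly list \<Rightarrow> bool" where
  "noncontra_chain d n C \<longleftrightarrow> triangular_set d n C \<and>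
     (\<forall>i<length C. \<forall>j<i. deg_in (mvar d n (C!j)) (C!i) < deg_in (mvar d n (C!j)) (C!j))"

definition contra_chain :: "nat \<Rightarrow> 'a::zero mpoly list \<Rightarrow> bool" where
  "contra_chain d C \<longleftrightarrow> (\<exists>F. C = [F] \<and> F \<noteq> 0 \<and> in_KU d F)"

definition asc_chain :: "nat \<Rightarrow> nat \<Rightarrow> 'a::zero mpoly list \<Rightarrow> bool" where
  "asc_chain d n C \<longleftrightarrow> noncontra_chain d n C \<or> contra_chain d C"

definition ideal_gen :: "'a::comm_ring_1 mpoly set \<Rightarrow> 'a mpoly set" where
  "ideal_gen P = {F. \<exists>Q f. finite Q \<and> Q \<subseteq> P \<and> F = (\<Sum>q\<in>Q. f q * q)}"

definition char_set :: "nat \<Rightarrow> nat \<Rightarrow> 'a::comm_ring_1 mpoly list \<Rightarrow> 'a mpoly set \<Rightarrow> bool" where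
  "char_set d n C P \<longleftrightarrow> asc_chain d n C \<and> set C \<subseteq> ideal_gen P \<and>
     (\<forall>F\<in>P. sprem d n F C = 0)"

text \<open>Systems reached by Wu's method from P, where cs is the procedure choosing a
  characteristic set for each system.\<close>
inductive wu_reached :: "nat \<Rightarrow> nat \<Rightarrow> ('a::comm_ring_1 mpoly set \<Rightarrow> 'a mpoly list)
    \<Rightarrow> 'a mpoly set \<Rightarrow> 'a mpoly set \<Rightarrow> bool"
  for d n cs P where
  start: "wu_reached d n cs P P"
| step: "wu_reached d n cs P Q \<Longrightarrow> noncontra_chain d n (cs Q) \<Longrightarrow> c \<in> set (cs Q) \<Longrightarrow>
         wu_reached d n cs P (Q \<union> set (cs Q) \<union> {initial d n c})"

definition wu_decomposition :: "nat \<Rightarrow> nat \<Rightarrow> 'a::comm_ring_1 mpoly set \<Rightarrow> 'a mpoly list set \<Rightarrow> bool" where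
  "wu_decomposition d n P S \<longleftrightarrow> finite S \<and> (\<exists>cs.
     (\<forall>Q. wu_reached d n cs P Q \<longrightarrow> char_set d n (cs Q) Q) \<and>
     S = {cs Q | Q. wu_reached d n cs P Q})"

definition wu_line :: "nat \<Rightarrow> nat \<Rightarrow> 'a::comm_ring_1 mpoly set \<Rightarrow> 'a mpoly list set
    \<Rightarrow> 'a mpoly list list \<Rightarrow> bool" where
  "wu_line d n P S L \<longleftrightarrow> L \<noteq> [] \<and> set L \<subseteq> S \<and>
     (\<exists>Ps. length Ps = length L \<and> Ps ! 0 = P \<and>
        (\<forall>i<length L. char_set d n (L!i) (Ps!i)) \<and>
        (\<forall>i. Suc i < length L \<longrightarrow> (\<exists>c\<in>set (L!i).
              Ps ! Suc i = Ps ! i \<union> set (L!i) \<union> {initial d n c})) \<and>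
        (\<forall>i. Suc i < length L \<longrightarrow> noncontra_chain d n (L!i)) \<and>
        contra_chain d (last L))"

definition field_hom :: "('a::field \<Rightarrow> 'b::field) \<Rightarrow> bool" where
  "field_hom \<phi> \<longleftrightarrow> \<phi> 1 = 1 \<and> (\<forall>x y. \<phi> (x + y) = \<phi> x + \<phi> y) \<and> (\<forall>x y. \<phi> (x * y) = \<phi> x * \<phi> y)"

definition is_alg_closure :: "('a::field \<Rightarrow> 'b::alg_closed_field) \<Rightarrow> bool" where
  "is_alg_closure \<phi> \<longleftrightarrow> field_hom \<phi> \<and>
     (\<forall>b. \<exists>q :: 'a poly. q \<noteq> 0 \<and> poly (map_poly \<phi> q) b = 0)"

text \<open>F(a) for F in K[U][X] and a in Kbar^d (coordinates a 0, ..., a (d-1)):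
  the polynomial in Kbar[X] obtained by substituting a_i for u_i.\<close>
definition subst_params :: "nat \<Rightarrow> ('a::field \<Rightarrow> 'b::field) \<Rightarrow> (nat \<Rightarrow> 'b) \<Rightarrow> 'a mpoly \<Rightarrow> 'b mpoly" where
  "subst_params d \<phi> a F = Abs_poly_mapping (\<lambda>mx.
     if (\<forall>i<d. Poly_Mapping.lookup mx i = 0) then
       (\<Sum>m\<in>{m\<in>Poly_Mapping.keys F. \<forall>i. d \<le> i \<longrightarrow> Poly_Mapping.lookup m i = Poly_Mapping.lookup mx i}.
           \<phi> (Poly_Mapping.lookup F m) * (\<Prod>i<d. a i ^ Poly_Mapping.lookup m i))
     else 0)"

definition eval_params :: "nat \<Rightarrow> ('a::field \<Rightarrow> 'b::field) \<Rightarrow> (nat \<Rightarrow> 'b) \<Rightarrow> 'a mpoly \<Rightarrow> 'b" where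
  "eval_params d \<phi> a F = (\<Sum>m\<in>Poly_Mapping.keys F. \<phi> (Poly_Mapping.lookup F m) * (\<Prod>i<d. a i ^ Poly_Mapping.lookup m i))"

text \<open>V^U(B): common zeros in Kbar^d (points a with a i = 0 for i >= d, as canonical
  representatives of d-tuples).\<close>
definition zero_set_U :: "nat \<Rightarrow> ('a::field \<Rightarrow> 'b::field) \<Rightarrow> 'a mpoly set \<Rightarrow> (nat \<Rightarrow> 'b) set" where
  "zero_set_U d \<phi> B = {a. (\<forall>i\<ge>d. a i = 0) \<and> (\<forall>F\<in>B. eval_params d \<phi> a F = 0)}"

definition points_U :: "nat \<Rightarrow> (nat \<Rightarrow> 'b::zero) set" where
  "points_U d = {a. \<forall>i\<ge>d. a i = 0}"

end

theory Submission
  imports Defs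
begin

definition hi :: "nat \<Rightarrow> (nat \<Rightarrow>\<^sub>0 nat) \<Rightarrow> (nat \<Rightarrow>\<^sub>0 nat)" where
  "hi d m = Abs_poly_mapping (\<lambda>i. if d \<le> i then Poly_Mapping.lookup m i else 0)"

lemma lookup_hi: "Poly_Mapping.lookup (hi d m) i = (if d \<le> i then Poly_Mapping.lookup m i else 0)"
proof -
  have "finite {i. (if d \<le> i then Poly_Mapping.lookup m i else 0) \<noteq> 0}"
    by (rule finite_subset[OF _ finite_lookup[of m]]) auto
  then show ?thesis unfolding hi_def by simp
qed

lemma hi_add: "hi d (m + m') = hi d m + hi d m'"
  by (rule poly_mapping_eqI) (simp add: lookup_hi lookup_add)

definition w :: "nat \<Rightarrow> (nat \<Rightarrow> 'b::field) \<Rightarrow> (nat \<Rightarrow>\<^sub>0 nat) \<Rightarrow> 'b" where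
  "w d a m = (\<Prod>i<d. a i ^ Poly_Mapping.lookup m i)"

lemma w_add: "w d a (m + m') = w d a m * w d a m'"
  by (simp add: w_def lookup_add power_add prod.distrib)

definition Psi :: "nat \<Rightarrow> ('a::field \<Rightarrow> 'b::field) \<Rightarrow> (nat \<Rightarrow> 'b) \<Rightarrow> 'a mpoly \<Rightarrow> 'b mpoly" where
  "Psi d \<phi> a F = (\<Sum>m\<in>Poly_Mapping.keys F. Poly_Mapping.single (hi d m) (\<phi> (Poly_Mapping.lookup F m) * w d a m))"

lemma fh0: "field_hom \<phi> \<Longrightarrow> \<phi> 0 = 0"
  unfolding field_hom_def by (metis add_cancel_right_right add_0)

lemma Psi_gen:
  assumes "field_hom \<phi>" "finite S" "Poly_Mapping.keys F \<subseteq> S"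
  shows "Psi d \<phi> a F = (\<Sum>m\<in>S. Poly_Mapping.single (hi d m) (\<phi> (Poly_Mapping.lookup F m) * w d a m))"
  unfolding Psi_def
  by (rule sum.mono_neutral_left[OF assms(2,3)]) (auto simp: fh0[OF assms(1)] in_keys_iff)

lemma Psi_add:
  assumes "field_hom \<phi>"
  shows "Psi d \<phi> a (F + G) = Psi d \<phi> a F + Psi d \<phi> a G"
proof -
  let ?S = "Poly_Mapping.keys F \<union> Poly_Mapping.keys G"
  have "Psi d \<phi> a (F + G) = (\<Sum>m\<in>?S. Poly_Mapping.single (hi d m) (\<phi> (Poly_Mapping.lookup (F+G) m) * w d a m))"
    using Psi_gen[OF assms, of ?S "F+G"] keys_add[of F G] by auto
  also have "\<dots> = (\<Sum>m\<in>?S. Poly_Mapping.single (hi d m) (\<phi> (Poly_Mapping.lookup F m) * w d a m)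
      + Poly_Mapping.single (hi d m) (\<phi> (Poly_Mapping.lookup G m) * w d a m))"
    using assms unfolding field_hom_def by (simp add: lookup_add distrib_right single_add)
  also have "\<dots> = Psi d \<phi> a F + Psi d \<phi> a G"
    by (simp add: sum.distrib Psi_gen[OF assms, of ?S F] Psi_gen[OF assms, of ?S G])
  finally show ?thesis .
qed

lemma Psi_zero: "Psi d \<phi> a 0 = 0" by (simp add: Psi_def)

lemma Psi_sum:
  assumes "field_hom \<phi>"
  shows "Psi d \<phi> a (\<Sum>i\<in>I. f i) = (\<Sum>i\<in>I. Psi d \<phi> a (f i))"
  by (induction I rule: infinite_finite_induct) (auto simp: Psi_zero Psi_add[OF assms])

lemma Psi_single:
  assumes "field_hom \<phi>"
  shows "Psi d \<phi> a (Poly_Mapping.single m c) = Poly_Mapping.single (hi d m) (\<phi> c * w d a m)"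
  using Psi_gen[OF assms, of "{m}" "Poly_Mapping.single m c"] by simp

lemma decomp: "F = (\<Sum>m\<in>Poly_Mapping.keys F. Poly_Mapping.single m (Poly_Mapping.lookup F m))"
proof (rule poly_mapping_eqI)
  fix k
  show "Poly_Mapping.lookup F k = Poly_Mapping.lookup (\<Sum>m\<in>Poly_Mapping.keys F. Poly_Mapping.single m (Poly_Mapping.lookup F m)) k"
    by (simp add: lookup_sum lookup_single when_def in_keys_iff)
qed

lemma Psi_mult:
  assumes "field_hom \<phi>"
  shows "Psi d \<phi> a (F * G) = Psi d \<phi> a F * Psi d \<phi> a G"
proof -
  have "F * G = (\<Sum>m\<in>Poly_Mapping.keys F. \<Sum>m'\<in>Poly_Mapping.keys G.
      Poly_Mapping.single (m + m') (Poly_Mapping.lookup F m * Poly_Mapping.lookup G m'))"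
    by (subst decomp[of F], subst decomp[of G]) (simp add: sum_product mult_single)
  then have "Psi d \<phi> a (F * G) = (\<Sum>m\<in>Poly_Mapping.keys F. \<Sum>m'\<in>Poly_Mapping.keys G.
      Poly_Mapping.single (hi d m + hi d m') (\<phi> (Poly_Mapping.lookup F m) * w d a m * (\<phi> (Poly_Mapping.lookup G m') * w d a m')))"
    using assms unfolding field_hom_def
    by (simp add: Psi_sum[OF assms] Psi_single[OF assms] hi_add w_add mult_ac)
  also have "\<dots> = Psi d \<phi> a F * Psi d \<phi> a G"
    unfolding Psi_def by (simp add: sum_product mult_single)
  finally show ?thesis .
qed

lemma lookup_Psi_gen:
  assumes "field_hom \<phi>" "finite S" "Poly_Mapping.keys F \<subseteq> S"
  shows "Poly_Mapping.lookup (Psi d \<phi> a F) mx =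
    (\<Sum>m\<in>S. if hi d m = mx then \<phi> (Poly_Mapping.lookup F m) * w d a m else 0)"
  by (simp add: Psi_gen[OF assms] lookup_sum lookup_single when_def)

lemma lookup_Psi:
  assumes "field_hom \<phi>"
  shows "Poly_Mapping.lookup (Psi d \<phi> a F) mx =
    (\<Sum>m\<in>Poly_Mapping.keys F. if hi d m = mx then \<phi> (Poly_Mapping.lookup F m) * w d a m else 0)"
  by (rule lookup_Psi_gen[OF assms]) auto

lemma hi_eq_iff: "hi d m = mx \<longleftrightarrow> (\<forall>i<d. Poly_Mapping.lookup mx i = 0) \<and> (\<forall>i. d \<le> i \<longrightarrow> Poly_Mapping.lookup m i = Poly_Mapping.lookup mx i)"
proof
  assume h: "hi d m = mx"
  have "Poly_Mapping.lookup mx i = (if d \<le> i then Poly_Mapping.lookup m i else 0)" for i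
    unfolding h[symmetric] lookup_hi ..
  then show "(\<forall>i<d. Poly_Mapping.lookup mx i = 0) \<and> (\<forall>i. d \<le> i \<longrightarrow> Poly_Mapping.lookup m i = Poly_Mapping.lookup mx i)"
    by simp
next
  assume H: "(\<forall>i<d. Poly_Mapping.lookup mx i = 0) \<and> (\<forall>i. d \<le> i \<longrightarrow> Poly_Mapping.lookup m i = Poly_Mapping.lookup mx i)"
  show "hi d m = mx"
  proof (rule poly_mapping_eqI)
    fix i show "Poly_Mapping.lookup (hi d m) i = Poly_Mapping.lookup mx i"
      using H by (cases "d \<le> i") (simp_all add: lookup_hi)
  qed
qed

lemma subst_Psi:
  assumes "field_hom \<phi>"
  shows "subst_params d \<phi> a F = Psi d \<phi> a F"
proof -
  have "(\<lambda>mx. if (\<forall>i<d. Poly_Mapping.lookup mx i = 0) then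
       (\<Sum>m\<in>{m\<in>Poly_Mapping.keys F. \<forall>i. d \<le> i \<longrightarrow> Poly_Mapping.lookup m i = Poly_Mapping.lookup mx i}.
           \<phi> (Poly_Mapping.lookup F m) * (\<Prod>i<d. a i ^ Poly_Mapping.lookup m i))
     else 0) = Poly_Mapping.lookup (Psi d \<phi> a F)"
  proof
    fix mx
    show "(if (\<forall>i<d. Poly_Mapping.lookup mx i = 0) then
       (\<Sum>m\<in>{m\<in>Poly_Mapping.keys F. \<forall>i. d \<le> i \<longrightarrow> Poly_Mapping.lookup m i = Poly_Mapping.lookup mx i}.
           \<phi> (Poly_Mapping.lookup F m) * (\<Prod>i<d. a i ^ Poly_Mapping.lookup m i))
     else 0) = Poly_Mapping.lookup (Psi d \<phi> a F) mx"
      unfolding lookup_Psi[OF assms] hi_eq_iff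
      apply (cases "\<forall>i<d. Poly_Mapping.lookup mx i = 0")
       apply (simp_all add: sum.inter_filter[symmetric] w_def)
      apply (rule sum.neutral) by auto
  qed
  then show ?thesis unfolding subst_params_def by simp
qed

lemma Psi_ideal:
  assumes "field_hom \<phi>" "\<forall>q\<in>P. Psi d \<phi> a q = 0" "F \<in> ideal_gen P"
  shows "Psi d \<phi> a F = 0"
proof -
  obtain Q f where "finite Q" "Q \<subseteq> P" "F = (\<Sum>q\<in>Q. f q * q)"
    using assms(3) unfolding ideal_gen_def by blast
  then show ?thesis using assms(2)
    by (auto simp: Psi_sum[OF assms(1)] Psi_mult[OF assms(1)] intro!: sum.neutral)
qed

lemma Psi_KU:
  assumes "field_hom \<phi>" "in_KU d F"
  shows "Poly_Mapping.lookup (Psi d \<phi> a F) 0 = eval_params d \<phi> a F"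
proof -
  have "hi d m = 0" if m: "m \<in> Poly_Mapping.keys F" for m
  proof (rule poly_mapping_eqI)
    fix i
    have "\<forall>i. Poly_Mapping.lookup m i > 0 \<longrightarrow> i < d"
      using assms(2) m unfolding in_KU_def vars_in_def by auto
    then show "Poly_Mapping.lookup (hi d m) i = Poly_Mapping.lookup 0 i"
      by (auto simp: lookup_hi)
  qed
  then show ?thesis unfolding lookup_Psi[OF assms(1)] eval_params_def w_def
    by (intro sum.cong) auto
qed

lemma Psi_lcoeff:
  assumes fh: "field_hom \<phi>" and dv: "d \<le> v" and c0: "Psi d \<phi> a c = 0"
  shows "Psi d \<phi> a (lcoeff_in v c) = 0"
proof -
  define D where "D = deg_in v c"
  define sv where "sv = (Poly_Mapping.single v D :: nat \<Rightarrow>\<^sub>0 nat)"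
  define f where "f = (\<lambda>m. if Poly_Mapping.lookup m v = 0 then Poly_Mapping.lookup c (m + sv) else 0)"
  define K where "K = {k\<in>Poly_Mapping.keys c. Poly_Mapping.lookup k v = D}"
  have lk_sv: "Poly_Mapping.lookup sv i = (if i = v then D else 0)" for i
    by (simp add: sv_def lookup_single when_def)
  have lk_minus: "Poly_Mapping.lookup (k - sv) i = (if i = v then 0 else Poly_Mapping.lookup k i)"
    if "k \<in> K" for k i using that by (simp add: lookup_minus lk_sv K_def)
  have minus_add: "k - sv + sv = k" if "k \<in> K" for k
    by (rule poly_mapping_eqI) (use that in \<open>simp add: lookup_add lk_minus lk_sv K_def\<close>)
  have sub: "{m. f m \<noteq> 0} \<subseteq> (\<lambda>k. k - sv) ` K"
  proof
    fix m assume "m \<in> {m. f m \<noteq> 0}"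
    then have m: "Poly_Mapping.lookup m v = 0" "Poly_Mapping.lookup c (m + sv) \<noteq> 0"
      by (auto simp: f_def split: if_splits)
    have "m + sv \<in> K" using m by (simp add: K_def in_keys_iff lookup_add lk_sv)
    moreover have "m = (m + sv) - sv"
      by (rule poly_mapping_eqI) (simp add: lookup_minus lookup_add)
    ultimately show "m \<in> (\<lambda>k. k - sv) ` K" by blast
  qed
  have finK: "finite K" by (simp add: K_def)
  have fin: "finite {m. f m \<noteq> 0}" using sub finK finite_subset by blast
  have L: "Poly_Mapping.lookup (lcoeff_in v c) = f"
  proof -
    have "lcoeff_in v c = Abs_poly_mapping f" unfolding lcoeff_in_def f_def sv_def D_def by (rule refl)
    then show ?thesis using fin by simp
  qed
  have keysL: "Poly_Mapping.keys (lcoeff_in v c) \<subseteq> (\<lambda>k. k - sv) ` K"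
    using sub by (auto simp: in_keys_iff L)
  have inj: "inj_on (\<lambda>k. k - sv) K"
  proof
    fix k k' assume "k \<in> K" "k' \<in> K" "k - sv = k' - sv"
    then show "k = k'" using minus_add by metis
  qed
  have fk: "f (k - sv) = Poly_Mapping.lookup c k" if "k \<in> K" for k
    using that by (simp add: f_def lk_minus minus_add)
  have wk: "w d a (k - sv) = w d a k" if "k \<in> K" for k
    unfolding w_def using that dv by (intro prod.cong) (auto simp: lk_minus)
  show ?thesis
  proof (rule poly_mapping_eqI)
    fix mx
    have "Poly_Mapping.lookup (Psi d \<phi> a (lcoeff_in v c)) mx =
      (\<Sum>m\<in>(\<lambda>k. k - sv) ` K. if hi d m = mx then \<phi> (f m) * w d a m else 0)"
      using lookup_Psi_gen[OF fh finite_imageI[OF finK] keysL, of d a mx, unfolded L] .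
    also have "\<dots> = (\<Sum>k\<in>K. if hi d (k - sv) = mx then \<phi> (Poly_Mapping.lookup c k) * w d a k else 0)"
      by (simp add: sum.reindex[OF inj]) (rule sum.cong, simp_all add: fk wk)
    also have "\<dots> = 0"
    proof (cases "Poly_Mapping.lookup mx v = 0")
      case True
      have eq: "hi d (k - sv) = mx \<longleftrightarrow> hi d k = mx + sv" if k: "k \<in> K" for k
      proof
        assume h: "hi d (k - sv) = mx"
        show "hi d k = mx + sv"
        proof (rule poly_mapping_eqI)
          fix i
          have "Poly_Mapping.lookup mx i = Poly_Mapping.lookup (hi d (k - sv)) i" using h by simp
          then show "Poly_Mapping.lookup (hi d k) i = Poly_Mapping.lookup (mx + sv) i"
            using k dv by (cases "i = v") (auto simp: lookup_hi lk_minus lookup_add lk_sv K_def)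
        qed
      next
        assume h: "hi d k = mx + sv"
        show "hi d (k - sv) = mx"
        proof (rule poly_mapping_eqI)
          fix i
          have "Poly_Mapping.lookup (hi d k) i = Poly_Mapping.lookup (mx + sv) i" using h by simp
          then show "Poly_Mapping.lookup (hi d (k - sv)) i = Poly_Mapping.lookup mx i"
            using k dv True by (cases "i = v") (auto simp: lookup_hi lk_minus lookup_add lk_sv K_def split: if_splits)
        qed
      qed
      have "(\<Sum>k\<in>K. if hi d (k - sv) = mx then \<phi> (Poly_Mapping.lookup c k) * w d a k else 0)
          = (\<Sum>k\<in>K. if hi d k = mx + sv then \<phi> (Poly_Mapping.lookup c k) * w d a k else 0)"
        by (rule sum.cong) (auto simp: eq)
      also have "\<dots> = (\<Sum>k\<in>Poly_Mapping.keys c. if hi d k = mx + sv then \<phi> (Poly_Mapping.lookup c k) * w d a k else 0)"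
      proof (rule sum.mono_neutral_left)
        show "\<forall>k\<in>Poly_Mapping.keys c - K. (if hi d k = mx + sv then \<phi> (Poly_Mapping.lookup c k) * w d a k else 0) = 0"
        proof (intro ballI)
          fix k assume k: "k \<in> Poly_Mapping.keys c - K"
          have "hi d k \<noteq> mx + sv"
          proof
            assume "hi d k = mx + sv"
            then have "Poly_Mapping.lookup (hi d k) v = Poly_Mapping.lookup (mx + sv) v" by simp
            then have "Poly_Mapping.lookup k v = D" using dv True by (simp add: lookup_hi lookup_add lk_sv)
            then show False using k by (simp add: K_def)
          qed
          then show "(if hi d k = mx + sv then \<phi> (Poly_Mapping.lookup c k) * w d a k else 0) = 0" by simp
        qed
      qed (auto simp: K_def)
      also have "\<dots> = Poly_Mapping.lookup (Psi d \<phi> a c) (mx + sv)"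
        by (simp add: lookup_Psi[OF fh])
      also have "\<dots> = 0" by (simp add: c0)
      finally show ?thesis .
    next
      case False
      have "hi d (k - sv) \<noteq> mx" if "k \<in> K" for k
      proof
        assume "hi d (k - sv) = mx"
        then have "Poly_Mapping.lookup (hi d (k - sv)) v = Poly_Mapping.lookup mx v" by simp
        then show False using False dv lk_minus[OF that, of v] by (simp add: lookup_hi)
      qed
      then show ?thesis by (intro sum.neutral) auto
    qed
    finally show "Poly_Mapping.lookup (Psi d \<phi> a (lcoeff_in v c)) mx = Poly_Mapping.lookup 0 mx" by simp
  qed
qed

theorem corollary1:
  fixes d n :: nat
    and p :: "'a::field mpoly"
    and \<phi> :: "'a \<Rightarrow> 'b::alg_closed_field"
    and S :: "'a mpoly list set"
    and L :: "'a mpoly list list"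
  assumes "is_alg_closure \<phi>"
    and "parametric_system d n {p}"
    and "wu_decomposition d n {p} S"
    and "wu_line d n {p} S L"
  shows "\<forall>a \<in> points_U d - zero_set_U d \<phi> (set (last L)). subst_params d \<phi> a p \<noteq> 0"
proof
  fix a assume a: "a \<in> points_U d - zero_set_U d \<phi> (set (last L))"
  have fh: "field_hom \<phi>" using assms(1) unfolding is_alg_closure_def by blast
  show "subst_params d \<phi> a p \<noteq> 0"
  proof
    assume p0: "subst_params d \<phi> a p = 0"
    obtain Ps where Lne: "L \<noteq> []" and len: "length Ps = length L" and P0: "Ps ! 0 = {p}"
      and cs: "\<forall>i<length L. char_set d n (L!i) (Ps!i)"
      and nx: "\<forall>i. Suc i < length L \<longrightarrow> (\<exists>c\<in>set (L!i). Ps ! Suc i = Ps ! i \<union> set (L!i) \<union> {initial d n c})"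
      and nc: "\<forall>i. Suc i < length L \<longrightarrow> noncontra_chain d n (L!i)"
      and cc: "contra_chain d (last L)"
      using assms(4) unfolding wu_line_def by blast
    have van: "\<forall>q\<in>Ps!i. Psi d \<phi> a q = 0" if "i < length L" for i
      using that
    proof (induction i)
      case 0
      then show ?case using p0 P0 by (simp add: subst_Psi[OF fh])
    next
      case (Suc i)
      then have IH: "\<forall>q\<in>Ps!i. Psi d \<phi> a q = 0" by simp
      obtain c where c: "c \<in> set (L!i)" and eq: "Ps ! Suc i = Ps ! i \<union> set (L!i) \<union> {initial d n c}"
        using nx Suc.prems by blast
      have chs: "set (L!i) \<subseteq> ideal_gen (Ps!i)" using cs Suc.prems unfolding char_set_def by simp
      have C0: "\<forall>q\<in>set (L!i). Psi d \<phi> a q = 0" using chs IH Psi_ideal[OF fh] by blast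
      have "cls d n c > 0" using nc Suc.prems c
        unfolding noncontra_chain_def triangular_set_def by blast
      then have "d \<le> mvar d n c" unfolding mvar_def by simp
      then have "Psi d \<phi> a (initial d n c) = 0"
        unfolding initial_def using Psi_lcoeff[OF fh] C0 c by blast
      then show ?case using eq IH C0 by auto
    qed
    obtain F where F: "last L = [F]" "in_KU d F" using cc unfolding contra_chain_def by blast
    have lastL: "last L = L ! (length L - 1)" using Lne by (simp add: last_conv_nth)
    have lt: "length L - 1 < length L" using Lne by simp
    have "set (last L) \<subseteq> ideal_gen (Ps ! (length L - 1))"
      using cs lt lastL unfolding char_set_def by metis
    then have "Psi d \<phi> a F = 0" using van[OF lt] Psi_ideal[OF fh] F(1) by auto
    then have "eval_params d \<phi> a F = 0" using Psi_KU[OF fh F(2), of a] by simp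
    then have "a \<in> zero_set_U d \<phi> (set (last L))"
      using a F(1) unfolding zero_set_U_def points_U_def by auto
    then show False using a by blast
  qed
qed

end
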